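(* Let $d\ge2$ and let $v_1,\dots,v_d\in\mathbb{R}^d$ be linearly independent, $\Delta=\mathrm{conv}(O,v_1,\dots,v_d)$. Let $\mathcal H$ be the hyperplane $\mathrm{Aff}(O,\,v_1+(d-1)v_2,\,v_1+(d-1)v_3,\dots,v_1+(d-1)v_d)$, and let $\delta$ be the simplex that $\mathcal H$ cuts off from $\mathrm{conv}(v_1,\dots,v_d)$ on the side containing $v_1$ (i.e. $\delta=\mathrm{conv}(v_1,\dots,v_d)\cap\mathcal H^{+}$, where $\mathcal H^+$ is the closed half-space bounded by $\mathcal H$ containing $v_1$). Let $\Phi$ be the closure of $$\mathbb{R}_+\delta\setminus\Bigl(\bigl(v_1+\mathbb{R}_+v_1+\mathbb{R}_+v_2+\dots+\mathbb{R}_+v_d\bigr)\cup\Delta\Bigr),$$ and $\Phi'=-\frac1{d-1}v_1+\frac d{d-1}\Phi$ (the image of $\Phi$ under the dilatation with center $v_1$ and factor $d/(d-1)$). Then $\Phi'\subset(d+1)\Delta$.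
   Context: $\mathbb{R}_+\delta$ is the cone $\{t x: t\ge0, x\in\delta\}$; $(d+1)\Delta$ is the dilate of $\Delta$ by $d+1$ with center $O$. *)

theory Defs
  imports "HOL-Analysis.Analysis"
begin

definition closed_halfspace_containing :: "'a::euclidean_space set \<Rightarrow> 'a \<Rightarrow> 'a set" where
  "closed_halfspace_containing H p =
     {x. \<exists>a b. a \<noteq> 0 \<and> H = {y. a \<bullet> y = b} \<and> b \<le> a \<bullet> p \<and> b \<le> a \<bullet> x}"

definition nonneg_cone :: "'a::real_vector set \<Rightarrow> 'a set" where
  "nonneg_cone S = {t *\<^sub>R x | t x. 0 \<le> t \<and> x \<in> S}"

end

theory Submission
  imports Defs
begin

lemma aux_ineq: fixes D S L :: real assumes "D \<ge> 2" "S \<le> D * L" "L \<le> 1"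
  shows "(D / (D - 1) * S - 1 / (D - 1)) / (D + 1) \<le> 1"
proof -
  have "D * L \<le> D" using mult_left_mono[of L 1 D] assms by simp
  then have "S \<le> D" using assms by linarith
  then have "D * S \<le> D * D" using mult_left_mono[of S D D] assms by simp
  then have "D * S - 1 \<le> (D + 1) * (D - 1)" by (simp add: algebra_simps)
  then have E: "(D * S - 1) / (D - 1) \<le> D + 1" using assms by (simp add: divide_le_eq mult.commute)
  have "D / (D - 1) * S - 1 / (D - 1) = (D * S - 1) / (D - 1)" by (simp add: diff_divide_distrib)
  moreover have "(D * S - 1) / (D - 1) / (D + 1) \<le> 1" using E assms by (subst divide_le_eq_1_pos) auto
  ultimately show ?thesis by simp
qed
lemma aux_sum: fixes f :: "nat \<Rightarrow> real" assumes "2 \<le> d" shows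
 "(\<Sum>i\<in>{1..d}. a * f i - (if i = 1 then b else 0)) = a * (\<Sum>i\<in>{1..d}. f i) - b"
  using assms by (simp add: sum_subtractf sum_distrib_left)

theorem mainTheorem9:
  fixes v :: "nat \<Rightarrow> real ^ 'n"
  defines "d \<equiv> CARD('n)"
  assumes d2: "2 \<le> d"
    and indep: "independent (v ` {1..d})" and inj: "inj_on v {1..d}"
  defines "\<Delta> \<equiv> convex hull (insert 0 (v ` {1..d}))"
    and "H \<equiv> affine hull (insert 0 ((\<lambda>i. v 1 + (real d - 1) *\<^sub>R v i) ` {2..d}))"
  defines "\<delta> \<equiv> convex hull (v ` {1..d}) \<inter> closed_halfspace_containing H (v 1)"
  defines "\<Phi> \<equiv> closure (nonneg_cone \<delta> -
              ({v 1 + (\<Sum>i\<in>{1..d}. c i *\<^sub>R v i) | c. \<forall>i. 0 \<le> c i} \<union> \<Delta>))"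
  defines "\<Phi>' \<equiv> (\<lambda>x. (- (1 / (real d - 1))) *\<^sub>R v 1 + (real d / (real d - 1)) *\<^sub>R x) ` \<Phi>"
  shows "\<Phi>' \<subseteq> (\<lambda>x. (real d + 1) *\<^sub>R x) ` \<Delta>"
proof -
  define B where "B = v ` {1..d}"
  define l where "l i x = representation B x (v i)" for i x
  have cardB: "card B = d" unfolding B_def using inj by (simp add: card_image)
  have spanB: "span B = UNIV"
  proof -
    have "UNIV \<subseteq> span B"
      by (rule card_ge_dim_independent) (use indep cardB in \<open>auto simp: B_def d_def\<close>)
    then show ?thesis by auto
  qed
  have indB: "independent B" using indep by (simp add: B_def)
  have ladd: "l i (x + y) = l i x + l i y" for i x y
    unfolding l_def using representation_add[OF indB] spanB by auto
  have lscale: "l i (c *\<^sub>R x) = c * l i x" for i c x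
    unfolding l_def using representation_scale[OF indB] spanB by auto
  have llin: "linear (l i)" for i
    by (rule linearI) (auto simp: ladd lscale)
  have lcont: "continuous_on UNIV (l i)" for i
    by (rule linear_continuous_on) (metis llin linear_conv_bounded_linear)
  have lv: "l i (v j) = (if i = j then 1 else 0)" if "i \<in> {1..d}" "j \<in> {1..d}" for i j
    unfolding l_def using representation_basis[OF indB, of "v j"] that inj
    by (auto simp: B_def inj_on_eq_iff)
  have l0: "l i 0 = 0" for i
    unfolding l_def by (simp add: representation_zero)
  have recon: "x = (\<Sum>i\<in>{1..d}. l i x *\<^sub>R v i)" for x
  proof -
    have "x = (\<Sum>b\<in>B. representation B x b *\<^sub>R b)"
      using sum_representation_eq[OF indB, of x B] spanB by (simp add: B_def)
    also have "\<dots> = (\<Sum>i\<in>{1..d}. l i x *\<^sub>R v i)"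
      unfolding B_def l_def by (subst sum.reindex[OF inj]) simp
    finally show ?thesis .
  qed
  define s where "s x = (\<Sum>i\<in>{1..d}. l i x)" for x
  have d1: "{1..d} = insert 1 {2..d}" using d2 by auto
  have lsum: "l i (\<Sum>j\<in>{1..d}. c j *\<^sub>R v j) = c i"
    if "i \<in> {1..d}" for i c
  proof -
    have "l i (\<Sum>j\<in>{1..d}. c j *\<^sub>R v j) = (\<Sum>j\<in>{1..d}. c j * l i (v j))"
      by (simp add: linear_sum[OF llin] lscale)
    also have "\<dots> = (\<Sum>j\<in>{1..d}. if i = j then c j else 0)"
      by (intro sum.cong refl) (simp add: lv[OF that])
    also have "\<dots> = c i" using that by simp
    finally show ?thesis .
  qed
  have hD: "convex hull B \<subseteq> \<Delta>" unfolding \<Delta>_def B_def by (rule hull_mono) auto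
  have zD: "0 \<in> \<Delta>" unfolding \<Delta>_def by (rule hull_inc) simp
  have M: "(\<Sum>i\<in>{1..d}. m i *\<^sub>R v i) \<in> \<Delta>"
    if m0: "\<And>i. i \<in> {1..d} \<Longrightarrow> 0 \<le> m i" and m1: "(\<Sum>i\<in>{1..d}. m i) \<le> 1" for m
  proof (cases "(\<Sum>i\<in>{1..d}. m i) = 0")
    case True
    then have "\<forall>i\<in>{1..d}. m i = 0" using m0 by (subst sum_nonneg_eq_0_iff[symmetric]) auto
    then show ?thesis using zD by simp
  next
    case False
    define \<sigma> where "\<sigma> = (\<Sum>i\<in>{1..d}. m i)"
    have sp: "\<sigma> > 0" using False m0 unfolding \<sigma>_def by (metis less_eq_real_def sum_nonneg)
    have "(\<Sum>i\<in>{1..d}. (m i / \<sigma>) *\<^sub>R v i) \<in> convex hull B"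
    proof (rule convex_sum)
      show "(\<Sum>i\<in>{1..d}. m i / \<sigma>) = 1" using sp by (simp add: \<sigma>_def sum_divide_distrib[symmetric])
    qed (use m0 sp in \<open>auto simp: B_def intro: hull_inc\<close>)
    then have w: "(\<Sum>i\<in>{1..d}. (m i / \<sigma>) *\<^sub>R v i) \<in> \<Delta>" using hD by auto
    have "\<sigma> *\<^sub>R (\<Sum>i\<in>{1..d}. (m i / \<sigma>) *\<^sub>R v i) + (1 - \<sigma>) *\<^sub>R 0 \<in> \<Delta>"
      by (rule convexD) (use w zD sp m1 in \<open>auto simp: \<Delta>_def \<sigma>_def\<close>)
    moreover have "\<sigma> *\<^sub>R (\<Sum>i\<in>{1..d}. (m i / \<sigma>) *\<^sub>R v i) = (\<Sum>i\<in>{1..d}. m i *\<^sub>R v i)"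
      using sp by (simp add: scaleR_sum_right)
    ultimately show ?thesis by simp
  qed
  have dpos: "real d - 1 > 0" using d2 by simp
  have sadd: "s (x + y) = s x + s y" for x y by (simp add: s_def ladd sum.distrib)
  have sscale: "s (c *\<^sub>R x) = c * s x" for c x by (simp add: s_def lscale sum_distrib_left)
  have sT: "s x = l 1 x + (\<Sum>i\<in>{2..d}. l i x)" for x
    unfolding s_def d1 by (subst sum.insert) auto
  have hullB: "convex hull B \<subseteq> {x. (\<forall>i\<in>{1..d}. 0 \<le> l i x) \<and> s x = 1}"
  proof (rule hull_minimal)
    show "B \<subseteq> {x. (\<forall>i\<in>{1..d}. 0 \<le> l i x) \<and> s x = 1}"
    proof
      fix x assume "x \<in> B"
      then obtain j where j: "j \<in> {1..d}" "x = v j" unfolding B_def by auto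
      have "s x = (\<Sum>i\<in>{1..d}. if i = j then 1 else 0)"
        unfolding s_def using j by (intro sum.cong refl) (simp add: lv)
      also have "\<dots> = 1" using j by simp
      finally show "x \<in> {x. (\<forall>i\<in>{1..d}. 0 \<le> l i x) \<and> s x = 1}" using j by (simp add: lv)
    qed
    show "convex {x. (\<forall>i\<in>{1..d}. 0 \<le> l i x) \<and> s x = 1}"
    proof (rule convexI)
      fix x y :: "real ^ 'n" and u w :: real
      assume x: "x \<in> {x. (\<forall>i\<in>{1..d}. 0 \<le> l i x) \<and> s x = 1}" and y: "y \<in> {x. (\<forall>i\<in>{1..d}. 0 \<le> l i x) \<and> s x = 1}"
        and u: "0 \<le> u" and w: "0 \<le> w" and uw: "u + w = 1"
      have "0 \<le> u * l i x + w * l i y" if "i \<in> {1..d}" for i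
        using x y u w that by (simp add: add_nonneg_nonneg mult_nonneg_nonneg)
      moreover have "u * s x + w * s y = 1" using x y uw by simp
      ultimately show "u *\<^sub>R x + w *\<^sub>R y \<in> {x. (\<forall>i\<in>{1..d}. 0 \<le> l i x) \<and> s x = 1}"
        by (simp add: ladd lscale sadd sscale)
    qed
  qed
  have hs: "real d * l 1 x \<ge> s x" if hx: "x \<in> closed_halfspace_containing H (v 1)" for x
  proof -
    obtain a b where a0: "a \<noteq> 0" and Hab: "H = {y. a \<bullet> y = b}" and b1: "b \<le> a \<bullet> v 1" and bx: "b \<le> a \<bullet> x"
    proof -
      have "\<exists>a b. a \<noteq> 0 \<and> H = {y. a \<bullet> y = b} \<and> b \<le> a \<bullet> v 1 \<and> b \<le> a \<bullet> x"
        using hx unfolding closed_halfspace_containing_def mem_Collect_eq .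
      then show ?thesis using that by metis
    qed
    have "0 \<in> H" unfolding H_def by (rule hull_inc) simp
    then have b0: "b = 0" using Hab by simp
    define \<alpha> where "\<alpha> = a \<bullet> v 1"
    have ai: "a \<bullet> v i = - \<alpha> / (real d - 1)" if "i \<in> {2..d}" for i
    proof -
      have "v 1 + (real d - 1) *\<^sub>R v i \<in> H" unfolding H_def by (rule hull_inc) (use that in auto)
      then have "\<alpha> + (real d - 1) * (a \<bullet> v i) = 0" using Hab b0 by (simp add: inner_add_right \<alpha>_def)
      then show ?thesis using dpos by (simp add: field_simps)
    qed
    have dot: "a \<bullet> y = (\<Sum>i\<in>{1..d}. l i y * (a \<bullet> v i))" for y
    proof -
      have "a \<bullet> y = a \<bullet> (\<Sum>i\<in>{1..d}. l i y *\<^sub>R v i)" using recon[of y] by simp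
      then show ?thesis by (simp add: inner_sum_right)
    qed
    have "\<alpha> \<noteq> 0"
    proof
      assume "\<alpha> = 0"
      have "\<forall>i\<in>{1..d}. a \<bullet> v i = 0"
      proof
        fix i assume i: "i \<in> {1..d}"
        show "a \<bullet> v i = 0"
        proof (cases "i = 1")
          case True then show ?thesis using \<open>\<alpha> = 0\<close> by (simp add: \<alpha>_def)
        next
          case False then have "i \<in> {2..d}" using i by auto
          then show ?thesis using ai \<open>\<alpha> = 0\<close> by simp
        qed
      qed
      then have "a \<bullet> a = 0" using dot[of a] by simp
      then show False using a0 by simp
    qed
    moreover have "\<alpha> \<ge> 0" using b1 b0 by (simp add: \<alpha>_def)
    ultimately have apos: "\<alpha> > 0" by simp
    have "a \<bullet> x = l 1 x * \<alpha> + (\<Sum>i\<in>{2..d}. l i x * (a \<bullet> v i))"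
      unfolding dot[of x] d1 by (subst sum.insert) (auto simp: \<alpha>_def)
    also have "(\<Sum>i\<in>{2..d}. l i x * (a \<bullet> v i)) = (\<Sum>i\<in>{2..d}. l i x * (- \<alpha> / (real d - 1)))"
      by (intro sum.cong refl) (simp only: ai)
    also have "\<dots> = (\<Sum>i\<in>{2..d}. l i x) * (- \<alpha> / (real d - 1))"
      by (simp only: sum_distrib_right[symmetric])
    also have "l 1 x * \<alpha> + (\<Sum>i\<in>{2..d}. l i x) * (- \<alpha> / (real d - 1)) = \<alpha> * (l 1 x - (\<Sum>i\<in>{2..d}. l i x) / (real d - 1))"
      by (simp add: field_simps)
    finally have "0 \<le> \<alpha> * (l 1 x - (\<Sum>i\<in>{2..d}. l i x) / (real d - 1))" using bx b0 by simp
    then have "0 \<le> l 1 x - (\<Sum>i\<in>{2..d}. l i x) / (real d - 1)" using apos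
      by (simp add: zero_le_mult_iff)
    then have "(\<Sum>i\<in>{2..d}. l i x) \<le> (real d - 1) * l 1 x" using dpos by (simp add: field_simps)
    then show ?thesis using sT[of x] by (simp add: algebra_simps)
  qed
  define C where "C = {x. (\<forall>i\<in>{1..d}. 0 \<le> l i x) \<and> s x \<le> real d * l 1 x \<and> l 1 x \<le> 1 \<and> 1 \<le> s x}"
  have scont: "continuous_on UNIV s"
    unfolding s_def[abs_def] by (intro continuous_on_sum lcont)
  have closedC: "closed C"
  proof -
    have "C = (\<Inter>i\<in>{1..d}. {x. 0 \<le> l i x}) \<inter> {x. s x \<le> real d * l 1 x} \<inter> {x. l 1 x \<le> 1} \<inter> {x. 1 \<le> s x}"
      unfolding C_def by auto
    moreover have "closed (\<Inter>i\<in>{1..d}. {x. 0 \<le> l i x})"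
      by (intro closed_INT ballI closed_Collect_le continuous_on_const lcont)
    moreover have "closed {x. s x \<le> real d * l 1 x}"
      by (intro closed_Collect_le scont continuous_on_mult continuous_on_const lcont)
    moreover have "closed {x. l 1 x \<le> 1}"
      by (intro closed_Collect_le continuous_on_const lcont)
    moreover have "closed {x. 1 \<le> s x}"
      by (intro closed_Collect_le continuous_on_const scont)
    ultimately show ?thesis by (simp add: closed_Int)
  qed
  have cone: "(\<forall>i\<in>{1..d}. 0 \<le> l i y) \<and> s y \<le> real d * l 1 y" if yc: "y \<in> nonneg_cone \<delta>" for y
  proof -
    obtain t x where y: "y = t *\<^sub>R x" and t: "0 \<le> t" and x: "x \<in> \<delta>"
      using yc unfolding nonneg_cone_def by blast
    have "x \<in> convex hull B" using x unfolding \<delta>_def B_def by simp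
    then have x1: "\<forall>i\<in>{1..d}. 0 \<le> l i x" "s x = 1" using hullB by auto
    have x2: "s x \<le> real d * l 1 x" using x hs unfolding \<delta>_def by blast
    have "t * s x \<le> t * (real d * l 1 x)" using x2 t by (rule mult_left_mono)
    then show ?thesis using x1 t y by (simp add: lscale sscale mult.left_commute)
  qed
  have sub: "nonneg_cone \<delta> - ({v 1 + (\<Sum>i\<in>{1..d}. c i *\<^sub>R v i) | c. \<forall>i. 0 \<le> c i} \<union> \<Delta>) \<subseteq> C"
  proof
    fix x assume "x \<in> nonneg_cone \<delta> - ({v 1 + (\<Sum>i\<in>{1..d}. c i *\<^sub>R v i) | c. \<forall>i. 0 \<le> c i} \<union> \<Delta>)"
    then have xc: "x \<in> nonneg_cone \<delta>" and xA: "x \<notin> {v 1 + (\<Sum>i\<in>{1..d}. c i *\<^sub>R v i) | c. \<forall>i. 0 \<le> c i}"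
      and xD: "x \<notin> \<Delta>" by auto
    have l0x: "\<forall>i\<in>{1..d}. 0 \<le> l i x" and sx: "s x \<le> real d * l 1 x" using cone[OF xc] by auto
    have s1: "1 \<le> s x"
    proof (rule ccontr)
      assume "\<not> 1 \<le> s x"
      then have "(\<Sum>i\<in>{1..d}. l i x *\<^sub>R v i) \<in> \<Delta>" using l0x by (intro M) (auto simp: s_def)
      then show False using xD recon[of x] by simp
    qed
    have l1: "l 1 x \<le> 1"
    proof (rule ccontr)
      assume "\<not> l 1 x \<le> 1"
      define c where "c i = (if i \<in> {1..d} then l i x - (if i = 1 then 1 else 0) else 0)" for i
      have c0: "\<forall>i. 0 \<le> c i" using l0x \<open>\<not> l 1 x \<le> 1\<close> by (auto simp: c_def)
      have "(\<Sum>i\<in>{1..d}. c i *\<^sub>R v i) = (\<Sum>i\<in>{1..d}. l i x *\<^sub>R v i - (if i = 1 then v 1 else 0))"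
        by (intro sum.cong refl) (auto simp: c_def scaleR_diff_left)
      also have "\<dots> = x - v 1" using d2 recon[of x]
        by (simp add: sum_subtractf)
      finally have "x = v 1 + (\<Sum>i\<in>{1..d}. c i *\<^sub>R v i)" by simp
      then show False using xA c0 by blast
    qed
    show "x \<in> C" unfolding C_def using l0x sx s1 l1 by auto
  qed
  have PhiC: "\<Phi> \<subseteq> C" unfolding \<Phi>_def by (rule closure_minimal[OF sub closedC])
  show ?thesis
  proof
    fix y assume "y \<in> \<Phi>'"
    then obtain x where x: "x \<in> \<Phi>" and y: "y = (- (1 / (real d - 1))) *\<^sub>R v 1 + (real d / (real d - 1)) *\<^sub>R x"
      unfolding \<Phi>'_def by auto
    have xC: "x \<in> C" using x PhiC by auto
    then have l0x: "\<forall>i\<in>{1..d}. 0 \<le> l i x" and sx: "s x \<le> real d * l 1 x" and l1: "l 1 x \<le> 1"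
      and s1: "1 \<le> s x" unfolding C_def by auto
    define m where "m i = (real d / (real d - 1) * l i x - (if i = 1 then 1 / (real d - 1) else 0)) / (real d + 1)" for i
    have m0: "0 \<le> m i" if "i \<in> {1..d}" for i
    proof (cases "i = 1")
      case True
      have "1 \<le> real d * l 1 x" using s1 sx by simp
      have "1 / (real d - 1) \<le> (real d * l 1 x) / (real d - 1)"
        using \<open>1 \<le> real d * l 1 x\<close> dpos by (intro divide_right_mono) auto
      then have "0 \<le> real d / (real d - 1) * l 1 x - 1 / (real d - 1)" by simp
      then show ?thesis using True unfolding m_def by simp
    next
      case False
      then show ?thesis using l0x that dpos unfolding m_def by simp
    qed
    have "(\<Sum>i\<in>{1..d}. m i) = (real d / (real d - 1) * s x - 1 / (real d - 1)) / (real d + 1)"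
    proof -
      have "(\<Sum>i\<in>{1..d}. m i) = (\<Sum>i\<in>{1..d}. real d / (real d - 1) * l i x - (if i = 1 then 1 / (real d - 1) else 0)) / (real d + 1)"
        unfolding m_def by (simp only: sum_divide_distrib)
      also have "(\<Sum>i\<in>{1..d}. real d / (real d - 1) * l i x - (if i = 1 then 1 / (real d - 1) else 0)) = real d / (real d - 1) * s x - 1 / (real d - 1)"
        unfolding s_def using aux_sum[OF d2] .
      finally show ?thesis .
    qed
    also have "\<dots> \<le> 1"
      by (rule aux_ineq) (use sx l1 d2 in auto)
    finally have "(\<Sum>i\<in>{1..d}. m i *\<^sub>R v i) \<in> \<Delta>" using m0 by (intro M) auto
    moreover have "y = (real d + 1) *\<^sub>R (\<Sum>i\<in>{1..d}. m i *\<^sub>R v i)"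
    proof -
      have "(real d + 1) *\<^sub>R (\<Sum>i\<in>{1..d}. m i *\<^sub>R v i)
          = (\<Sum>i\<in>{1..d}. (real d / (real d - 1)) *\<^sub>R (l i x *\<^sub>R v i) - (if i = 1 then (1 / (real d - 1)) *\<^sub>R v 1 else 0))"
        unfolding scaleR_sum_right by (intro sum.cong refl) (auto simp: m_def scaleR_diff_left)
      also have "\<dots> = (\<Sum>i\<in>{1..d}. (real d / (real d - 1)) *\<^sub>R (l i x *\<^sub>R v i)) - (\<Sum>i\<in>{1..d}. if i = 1 then (1 / (real d - 1)) *\<^sub>R v 1 else 0)"
        by (simp only: sum_subtractf)
      also have "(\<Sum>i\<in>{1..d}. (real d / (real d - 1)) *\<^sub>R (l i x *\<^sub>R v i)) = (real d / (real d - 1)) *\<^sub>R x"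
        by (simp only: scaleR_sum_right[symmetric] recon[of x, symmetric])
      also have "(\<Sum>i\<in>{1..d}. if i = 1 then (1 / (real d - 1)) *\<^sub>R v 1 else 0) = (1 / (real d - 1)) *\<^sub>R v 1"
        using d2 by simp
      finally show ?thesis using y by simp
    qed
    ultimately show "y \<in> (\<lambda>x. (real d + 1) *\<^sub>R x) ` \<Delta>" by blast
  qed
qed

end
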